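(* Let $p\in[1,\infty]$, $\boldsymbol{w}\in\mathbb{R}^d\setminus\{\boldsymbol{0}\}$, $b\in\mathbb{R}$, $C(\boldsymbol{x})=\mathbf{1}\{\boldsymbol{w}\cdot\boldsymbol{x}+b>0\}$, let $\boldsymbol{\mu}_0\in\mathbb{R}^d$ be a unit vector (Euclidean norm), $\varepsilon>0$, $\delta\ge0$. Let $D_{\varepsilon,\delta|p}=\{\boldsymbol{v}\in\mathbb{R}^d:\|\boldsymbol{v}\|_p\le\varepsilon,\ |\boldsymbol{v}\cdot\boldsymbol{\mu}_0|\le\delta\}$ and let $\boldsymbol{u}_p$ be a maximizer of $|\boldsymbol{w}\cdot\boldsymbol{v}|$ over $\boldsymbol{v}\in D_{\varepsilon,\delta|p}$. Then $$\Omega_{\varepsilon,\delta|p}=\Omega(\boldsymbol{u}_p)\cup\Omega(-\boldsymbol{u}_p),$$ where $\Omega_{\varepsilon,\delta|p}$ is the set of $\boldsymbol{x}\in\mathbb{R}^d$ for which there is $\boldsymbol{x}'$ with $\|\boldsymbol{x}-\boldsymbol{x}'\|_p\le\varepsilon$, $|(\boldsymbol{x}-\boldsymbol{x}')\cdot\boldsymbol{\mu}_0|\le\delta$ and $C(\boldsymbol{x}')\ne C(\boldsymbol{x})$.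
   Context: For $\boldsymbol{v}\in\mathbb{R}^d$, $\Omega(\boldsymbol{v})=\{\boldsymbol{x}\in\mathbb{R}^d:C(\boldsymbol{x}+\boldsymbol{v})\ne C(\boldsymbol{x})\}$. *)

theory Defs
  imports "HOL-Analysis.Analysis" "HOL-Library.Extended_Real"
begin

definition pnorm :: "ereal \<Rightarrow> real ^ 'd \<Rightarrow> real" where
  "pnorm p v = (if p = \<infinity> then Max (range (\<lambda>i. \<bar>v $ i\<bar>))
     else (\<Sum>i\<in>UNIV. \<bar>v $ i\<bar> powr real_of_ereal p) powr (1 / real_of_ereal p))"

definition lin_clf :: "real ^ 'd \<Rightarrow> real \<Rightarrow> real ^ 'd \<Rightarrow> real" where
  "lin_clf w b x = (if w \<bullet> x + b > 0 then 1 else 0)"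

definition Omega :: "(real ^ 'd \<Rightarrow> real) \<Rightarrow> real ^ 'd \<Rightarrow> (real ^ 'd) set" where
  "Omega C v = {x. C (x + v) \<noteq> C x}"

definition Dset :: "ereal \<Rightarrow> real \<Rightarrow> real \<Rightarrow> real ^ 'd \<Rightarrow> (real ^ 'd) set" where
  "Dset p \<epsilon> \<delta> \<mu>0 = {v. pnorm p v \<le> \<epsilon> \<and> \<bar>v \<bullet> \<mu>0\<bar> \<le> \<delta>}"

definition Omega_adv :: "(real ^ 'd \<Rightarrow> real) \<Rightarrow> ereal \<Rightarrow> real \<Rightarrow> real \<Rightarrow> real ^ 'd \<Rightarrow> (real ^ 'd) set" where
  "Omega_adv C p \<epsilon> \<delta> \<mu>0 = {x. \<exists>x'. pnorm p (x - x') \<le> \<epsilon> \<and> \<bar>(x - x') \<bullet> \<mu>0\<bar> \<le> \<delta> \<and> C x' \<noteq> C x}"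

end

theory Submission
  imports Defs
begin

lemma pnorm_neg: "pnorm p (- v) = pnorm p v"
  unfolding pnorm_def by simp

lemma Dset_neg: "v \<in> Dset p \<epsilon> \<delta> \<mu>0 \<Longrightarrow> - v \<in> Dset p \<epsilon> \<delta> \<mu>0"
  unfolding Dset_def by (simp add: pnorm_neg)

theorem lemma5:
  fixes w \<mu>0 u :: "real ^ 'd" and b \<epsilon> \<delta> :: real and p :: ereal
  assumes "1 \<le> p"
    and "w \<noteq> 0"
    and "norm \<mu>0 = 1"
    and "\<epsilon> > 0" and "\<delta> \<ge> 0"
    and "u \<in> Dset p \<epsilon> \<delta> \<mu>0"
    and "\<forall>v\<in>Dset p \<epsilon> \<delta> \<mu>0. \<bar>w \<bullet> v\<bar> \<le> \<bar>w \<bullet> u\<bar>"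
  shows "Omega_adv (lin_clf w b) p \<epsilon> \<delta> \<mu>0 = Omega (lin_clf w b) u \<union> Omega (lin_clf w b) (- u)"
proof
  show "Omega_adv (lin_clf w b) p \<epsilon> \<delta> \<mu>0 \<subseteq> Omega (lin_clf w b) u \<union> Omega (lin_clf w b) (- u)"
  proof
    fix x assume "x \<in> Omega_adv (lin_clf w b) p \<epsilon> \<delta> \<mu>0"
    then obtain x' where x': "pnorm p (x - x') \<le> \<epsilon>" "\<bar>(x - x') \<bullet> \<mu>0\<bar> \<le> \<delta>"
      "lin_clf w b x' \<noteq> lin_clf w b x" unfolding Omega_adv_def by blast
    define v where "v = x' - x"
    have "x - x' \<in> Dset p \<epsilon> \<delta> \<mu>0" using x' unfolding Dset_def by simp
    hence vD: "v \<in> Dset p \<epsilon> \<delta> \<mu>0" using Dset_neg[of "x - x'"] unfolding v_def by simp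
    have le: "\<bar>w \<bullet> v\<bar> \<le> \<bar>w \<bullet> u\<bar>" using assms(7) vD by blast
    have x'eq: "x' = x + v" unfolding v_def by simp
    have flip: "(w \<bullet> x + b > 0) \<noteq> (w \<bullet> x + w \<bullet> v + b > 0)"
      using x'(3) unfolding x'eq lin_clf_def by (auto simp: inner_add_right split: if_splits)
    have "(w \<bullet> x + b > 0) \<noteq> (w \<bullet> x + w \<bullet> u + b > 0) \<or> (w \<bullet> x + b > 0) \<noteq> (w \<bullet> x - w \<bullet> u + b > 0)"
      using flip le by (cases "w \<bullet> u \<ge> 0"; auto simp: abs_if split: if_splits)
    thus "x \<in> Omega (lin_clf w b) u \<union> Omega (lin_clf w b) (- u)"
      unfolding Omega_def lin_clf_def by (auto simp: inner_add_right inner_minus_right algebra_simps)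
  qed
next
  have uD: "u \<in> Dset p \<epsilon> \<delta> \<mu>0" and muD: "- u \<in> Dset p \<epsilon> \<delta> \<mu>0"
    using assms(6) Dset_neg by auto
  show "Omega (lin_clf w b) u \<union> Omega (lin_clf w b) (- u) \<subseteq> Omega_adv (lin_clf w b) p \<epsilon> \<delta> \<mu>0"
  proof
    fix x assume "x \<in> Omega (lin_clf w b) u \<union> Omega (lin_clf w b) (- u)"
    then consider "lin_clf w b (x + u) \<noteq> lin_clf w b x" | "lin_clf w b (x - u) \<noteq> lin_clf w b x"
      unfolding Omega_def by auto
    thus "x \<in> Omega_adv (lin_clf w b) p \<epsilon> \<delta> \<mu>0"
    proof cases
      case 1
      have "x - (x + u) = - u" by simp
      thus ?thesis using 1 muD unfolding Omega_adv_def Dset_def by (intro CollectI exI[of _ "x + u"]) auto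
    next
      case 2
      have "x - (x - u) = u" by simp
      thus ?thesis using 2 uD unfolding Omega_adv_def Dset_def by (intro CollectI exI[of _ "x - u"]) auto
    qed
  qed
qed

end
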